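(* Let $A>0$. For all $C_0,C_1\in B_i(S^1,\mathbb R^2)$, $$\sqrt{\ell(C_1)}-\sqrt{\ell(C_0)}\le\frac{1}{2\sqrt A}\,\mathrm{dist}^{B_i}_{G^A}(C_0,C_1).$$
   Context: $S^1=\mathbb R/2\pi\mathbb Z$, $\mathbb R^2\cong\mathbb C$. $\mathrm{Imm}=\mathrm{Imm}(S^1,\mathbb R^2)$ is the space of smooth immersions, $\mathrm{Diff}(S^1)$ acts on it by reparametrization, $B_i(S^1,\mathbb R^2)=\mathrm{Imm}/\mathrm{Diff}(S^1)$ with projection $\pi$. For $c\in\mathrm{Imm}$: $\ell(c)=\int_{S^1}|c_\theta|\,d\theta$ (invariant, so defined on $B_i$), $n_c=ic_\theta/|c_\theta|$, $\kappa_c=\det(c_\theta,c_{\theta\theta})/|c_\theta|^3$. For a smooth path $c:[0,1]\times S^1\to\mathbb R^2$ with each $c(t,\cdot)\in\mathrm{Imm}$, and $A\ge0$, $$L^{hor}_{G^A}(c)=\int_0^1\Big(\int_{S^1}(1+A\kappa_{c(t)}^2)\langle c_t,n_{c(t)}\rangle^2|c_\theta|\,d\theta\Big)^{1/2}dt,$$ and $\mathrm{dist}^{B_i}_{G^A}(C_0,C_1)$ is the infimum of $L^{hor}_{G^A}(c)$ over all such paths with $\pi(c(0,\cdot))=C_0$, $\pi(c(1,\cdot))=C_1$. *)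

theory Defs
  imports "HOL-Analysis.Analysis" "HOL-Library.Extended_Real"
begin

text \<open>S^1 = R / 2 pi Z: maps on S^1 are represented by 2pi-periodic maps on R; R^2 = C.\<close>

definition smooth_fun :: "(real \<Rightarrow> 'a::real_normed_vector) \<Rightarrow> bool" where
  "smooth_fun f \<longleftrightarrow> (\<exists>D. D 0 = f \<and>
      (\<forall>k x. (D k has_vector_derivative D (Suc k) x) (at x)))"

definition immersion :: "(real \<Rightarrow> complex) \<Rightarrow> bool" where
  "immersion c \<longleftrightarrow> smooth_fun c \<and> (\<forall>\<theta>. c (\<theta> + 2*pi) = c \<theta>) \<and>
      (\<forall>\<theta>. vector_derivative c (at \<theta>) \<noteq> 0)"

text \<open>Diff(S^1), represented by lifts to R (orientation preserving or reversing).\<close>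
definition circle_diff :: "(real \<Rightarrow> real) \<Rightarrow> bool" where
  "circle_diff \<phi> \<longleftrightarrow> smooth_fun \<phi> \<and> (\<forall>\<theta>. vector_derivative \<phi> (at \<theta>) \<noteq> 0) \<and>
      (\<exists>\<epsilon>\<in>{-1, 1}. \<forall>\<theta>. \<phi> (\<theta> + 2*pi) = \<phi> \<theta> + \<epsilon> * (2*pi))"

text \<open>pi c = pi d in B_i = Imm / Diff(S^1).\<close>
definition same_orbit :: "(real \<Rightarrow> complex) \<Rightarrow> (real \<Rightarrow> complex) \<Rightarrow> bool" where
  "same_orbit c d \<longleftrightarrow> (\<exists>\<phi>. circle_diff \<phi> \<and> c = d \<circ> \<phi>)"

definition len :: "(real \<Rightarrow> complex) \<Rightarrow> real" where
  "len c = integral {0..2*pi} (\<lambda>\<theta>. norm (vector_derivative c (at \<theta>)))"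

definition d_theta :: "(real \<Rightarrow> complex) \<Rightarrow> real \<Rightarrow> complex" where
  "d_theta c \<theta> = vector_derivative c (at \<theta>)"

definition normal :: "(real \<Rightarrow> complex) \<Rightarrow> real \<Rightarrow> complex" where
  "normal c \<theta> = \<i> * d_theta c \<theta> / complex_of_real (norm (d_theta c \<theta>))"

text \<open>det(a,b) = Im (cnj a * b).\<close>
definition curvature :: "(real \<Rightarrow> complex) \<Rightarrow> real \<Rightarrow> real" where
  "curvature c \<theta> = Im (cnj (d_theta c \<theta>) * d_theta (d_theta c) \<theta>) / norm (d_theta c \<theta>) ^ 3"

definition smooth_path :: "(real \<Rightarrow> real \<Rightarrow> complex) \<Rightarrow> bool" where
  "smooth_path c \<longleftrightarrow>
     (\<exists>U D. open U \<and> {0..1} \<times> UNIV \<subseteq> U \<and>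
        (\<forall>p\<in>U. D 0 0 p = case_prod c p) \<and>
        (\<forall>i j. continuous_on U (D i j)) \<and>
        (\<forall>i j t \<theta>. (t, \<theta>) \<in> U \<longrightarrow>
            ((\<lambda>s. D i j (s, \<theta>)) has_vector_derivative D (Suc i) j (t, \<theta>)) (at t) \<and>
            ((\<lambda>s. D i j (t, s)) has_vector_derivative D i (Suc j) (t, \<theta>)) (at \<theta>))) \<and>
     (\<forall>t\<in>{0..1}. immersion (c t))"

definition L_hor :: "real \<Rightarrow> (real \<Rightarrow> real \<Rightarrow> complex) \<Rightarrow> real" where
  "L_hor A c = integral {0..1} (\<lambda>t. sqrt (integral {0..2*pi} (\<lambda>\<theta>.
      (1 + A * (curvature (c t) \<theta>)\<^sup>2) *
      (vector_derivative (\<lambda>s. c s \<theta>) (at t) \<bullet> normal (c t) \<theta>)\<^sup>2 *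
      norm (d_theta (c t) \<theta>))))"

text \<open>dist^{B_i}_{G^A}(pi c0, pi c1); infimum in the extended reals (= +infinity if no path).\<close>
definition dist_Bi :: "real \<Rightarrow> (real \<Rightarrow> complex) \<Rightarrow> (real \<Rightarrow> complex) \<Rightarrow> ereal" where
  "dist_Bi A c0 c1 = Inf {ereal (L_hor A c) | c. smooth_path c \<and>
       same_orbit (c 0) c0 \<and> same_orbit (c 1) c1}"

end

theory Submission
  imports Defs
begin

lemma smooth_fun_D1:
  assumes "smooth_fun f"
  obtains f' where "\<And>x. (f has_vector_derivative f' x) (at x)" "continuous_on UNIV f'"
proof -
  obtain D where D: "D 0 = f" "\<And>k x. (D k has_vector_derivative D (Suc k) x) (at x)"
    using assms unfolding smooth_fun_def by blast
  have "continuous_on UNIV (D 1)"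
    by (rule continuous_on_vector_derivative) (use D(2) has_vector_derivative_at_within in auto)
  then show ?thesis using that[of "D 1"] D by auto
qed

lemma periodic_deriv:
  fixes f :: "real \<Rightarrow> 'a::real_normed_vector"
  assumes "\<And>x. f (x + p) = f x" "\<And>x. (f has_vector_derivative f' x) (at x)"
  shows "f' (x + p) = f' x"
proof -
  have "((f \<circ> (\<lambda>x. x + p)) has_vector_derivative (1 *\<^sub>R f' (x + p))) (at x)"
    by (rule vector_diff_chain_at) (auto intro!: derivative_eq_intros assms(2))
  moreover have "f \<circ> (\<lambda>x. x + p) = f" using assms(1) by (auto simp: fun_eq_iff)
  ultimately have "(f has_vector_derivative f' (x + p)) (at x)" by simp
  then show ?thesis using assms(2) vector_derivative_unique_at by blast
qed

lemma sign_const: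
  fixes g :: "real \<Rightarrow> real"
  assumes "continuous_on UNIV g" "\<And>x. g x \<noteq> 0"
  shows "(\<forall>x. g x > 0) \<or> (\<forall>x. g x < 0)"
proof (rule ccontr)
  assume "\<not> ?thesis"
  then obtain a b where ab: "g a > 0" "g b < 0" using assms(2) by (meson linorder_neqE_linordered_idom)
  have c: "\<And>u v. continuous_on {u..v} g" using assms(1) continuous_on_subset by blast
  show False
  proof (cases "a \<le> b")
    case True
    from IVT2'[of g b 0 a, OF _ _ True c] ab assms(2) show False by force
  next
    case False
    from IVT'[of g b 0 a, OF _ _ _ c] ab assms(2) False show False by force
  qed
qed

lemma len_reparam:
  assumes d: "immersion d" and ph: "circle_diff \<phi>"
  shows "len (d \<circ> \<phi>) = len d"
proof -
  obtain d' where d': "\<And>x. (d has_vector_derivative d' x) (at x)" "continuous_on UNIV d'"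
    using d unfolding immersion_def by (meson smooth_fun_D1)
  have dper: "\<And>x. d (x + 2*pi) = d x" using d unfolding immersion_def by auto
  obtain p' where p': "\<And>x. (\<phi> has_vector_derivative p' x) (at x)" "continuous_on UNIV p'"
    using ph unfolding circle_diff_def by (meson smooth_fun_D1)
  have p'nz: "\<And>x. p' x \<noteq> 0" using ph p'(1) unfolding circle_diff_def
    by (metis vector_derivative_at)
  obtain \<epsilon> where eps: "\<epsilon> \<in> {-1, 1}" "\<And>x. \<phi> (x + 2*pi) = \<phi> x + \<epsilon> * (2*pi)"
    using ph unfolding circle_diff_def by blast
  define f where "f u = norm (d' u)" for u
  have fc: "continuous_on UNIV f" unfolding f_def using d'(2) by (intro continuous_intros)
  have fper: "f (x + 2*pi) = f x" for x unfolding f_def using periodic_deriv[OF dper d'(1)] by simp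
  have pc: "continuous_on UNIV \<phi>" using p'(1) continuous_on_vector_derivative has_vector_derivative_at_within by blast
  have dphi: "vector_derivative (d \<circ> \<phi>) (at x) = p' x *\<^sub>R d' (\<phi> x)" for x
    using vector_diff_chain_at[OF p'(1) d'(1)] vector_derivative_at by blast
  have "(\<forall>x. p' x > 0) \<or> (\<forall>x. p' x < 0)" using sign_const[OF p'(2) p'nz] .
  then obtain \<sigma> :: real where sig: "\<sigma> = \<epsilon>" "\<And>x. \<bar>p' x\<bar> = \<sigma> * p' x"
  proof (elim disjE)
    assume pos: "\<forall>x. p' x > 0"
    have "\<phi> 0 < \<phi> (0 + 2*pi)"
      by (rule DERIV_pos_imp_increasing) (use pos p'(1) in \<open>auto simp: has_real_derivative_iff_has_vector_derivative\<close>)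
    then have "\<epsilon> = 1" using eps(1) eps(2)[of 0] pi_gt_zero by auto
    then show ?thesis using that[of 1] pos by (simp add: abs_of_pos)
  next
    assume neg: "\<forall>x. p' x < 0"
    have "- \<phi> 0 < - \<phi> (2*pi)"
      apply (rule DERIV_pos_imp_increasing[where f="\<lambda>x. - \<phi> x" and a=0 and b="2*pi"])
      subgoal by simp
      subgoal for x using neg p'(1)[of x] by (intro exI[of _ "- p' x"]) (auto simp: has_real_derivative_iff_has_vector_derivative[symmetric] intro: DERIV_minus)
      done
    then have "\<epsilon> = -1" using eps(1) eps(2)[of 0] pi_gt_zero by auto
    then show ?thesis using that[of "-1"] neg by (simp add: abs_of_neg)
  qed
  have "compact (\<phi> ` {0..2*pi})" by (rule compact_continuous_image) (use pc continuous_on_subset in auto)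
  then obtain B where B: "\<And>x. x \<in> {0..2*pi} \<Longrightarrow> \<bar>\<phi> x\<bar> \<le> B"
    by (metis compact_imp_bounded bounded_real image_eqI)
  define R where "R = \<bar>B\<bar> + 4*pi + 1"
  define H where "H x = integral {-R..x} f" for x
  have H': "(H has_real_derivative f x) (at x)" if "x \<in> {-R<..<R}" for x
  proof -
    have "(H has_vector_derivative f x) (at x within {-R..R})"
      unfolding H_def by (rule integral_has_vector_derivative) (use fc continuous_on_subset that in auto)
    then show ?thesis using that by (simp add: at_within_Icc_at has_real_derivative_iff_has_vector_derivative)
  qed
  have Hint: "integral {u..v} f = H v - H u" if "-R \<le> u" "u \<le> v" for u v
  proof -
    have "integral {-R..u} f + integral {u..v} f = integral {-R..v} f"
      by (rule Henstock_Kurzweil_Integration.integral_combine) (use that fc continuous_on_subset[OF fc] integrable_continuous_real in auto)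
    then show ?thesis unfolding H_def by simp
  qed
  have Kc: "\<exists>c. \<forall>s\<in>{-R<..<R-2*pi}. H (s + 2*pi) - H s = c"
  proof (rule has_field_derivative_zero_constant)
    fix s assume s: "s \<in> {-R<..<R-2*pi}"
    have "((\<lambda>s. H (s + 2*pi) - H s) has_real_derivative (f (s + 2*pi) * 1 - f s)) (at s)"
    proof -
      have "s + 2*pi \<in> {-R<..<R}" "s \<in> {-R<..<R}" using s pi_ge_two by auto
      then have h: "(H has_real_derivative f (s + 2*pi)) (at (s + 2*pi))" "(H has_real_derivative f s) (at s)"
        using H' by auto
      show ?thesis
        by (intro derivative_intros DERIV_chain2[where f=H and g="\<lambda>x. x + 2*pi", OF h(1)] h(2)) (auto intro!: derivative_eq_intros)
    qed
    then show "((\<lambda>s. H (s + 2*pi) - H s) has_real_derivative 0) (at s within {-R<..<R-2*pi})"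
      by (simp add: fper has_field_derivative_at_within)
  qed simp
  then obtain k where k: "\<And>s. s \<in> {-R<..<R-2*pi} \<Longrightarrow> H (s + 2*pi) - H s = k" by blast
  have R: "R > 4*pi" "\<bar>B\<bar> + 4 * pi < R" "R > 0" "2*pi < R" "R - 2*pi > 0" unfolding R_def using pi_ge_two abs_ge_zero[of B] by linarith+
  have "k = H (0 + 2*pi) - H 0" using k[of 0] R by auto
  also have "\<dots> = len d"
  proof -
    have fD: "(\<lambda>\<theta>. norm (d' \<theta>)) = f" by (auto simp: f_def)
    show ?thesis unfolding len_def using Hint[of 0 "2*pi"] R vector_derivative_at[OF d'(1)] by (simp add: fD)
  qed
  finally have kl: "k = len d" .
  have B0: "\<bar>\<phi> 0\<bar> \<le> B" using B[of 0] by simp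
  have ftc: "((\<lambda>x. p' x * f (\<phi> x)) has_integral (H (\<phi> (2*pi)) - H (\<phi> 0))) {0..2*pi}"
  proof -
    have "((\<lambda>x. H (\<phi> x)) has_vector_derivative p' x * f (\<phi> x)) (at x within {0..2*pi})"
      if "x \<in> {0..2*pi}" for x
    proof -
      have "\<bar>\<phi> x\<bar> \<le> B" using B that by blast
      then have "\<phi> x \<in> {-R<..<R}" using R pi_ge_two by (auto simp: abs_le_iff)
      then have "((\<lambda>x. H (\<phi> x)) has_real_derivative f (\<phi> x) * p' x) (at x)"
        using DERIV_chain2[OF H' p'(1)[unfolded has_real_derivative_iff_has_vector_derivative[symmetric]]] by blast
      then show ?thesis by (simp add: has_real_derivative_iff_has_vector_derivative[symmetric] has_field_derivative_at_within mult.commute)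
    qed
    then show ?thesis by (intro fundamental_theorem_of_calculus) auto
  qed
  have "len (d \<circ> \<phi>) = integral {0..2*pi} (\<lambda>x. \<sigma> * (p' x * f (\<phi> x)))"
    unfolding len_def dphi by (rule integral_cong) (simp add: f_def sig(2) abs_mult)
  also have "\<dots> = \<sigma> * (H (\<phi> (2*pi)) - H (\<phi> 0))"
    using integral_unique[OF has_integral_mult_right[OF ftc]] by simp
  also have "\<dots> = len d"
  proof (cases "\<epsilon> = 1")
    case True
    have "\<phi> 0 \<in> {-R<..<R-2*pi}" using B0 R pi_ge_two by (auto simp: abs_le_iff)
    then show ?thesis using k[of "\<phi> 0"] kl eps(2)[of 0] True sig(1) by simp
  next
    case False
    then have e: "\<epsilon> = -1" using eps(1) by auto
    have "\<phi> 0 - 2*pi \<in> {-R<..<R-2*pi}" using B0 R pi_ge_two by (auto simp: abs_le_iff)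
    then show ?thesis using k[of "\<phi> 0 - 2*pi"] kl eps(2)[of 0] e sig(1) by simp
  qed
  finally show ?thesis .
qed


lemma norm_vd:
  fixes f :: "real \<Rightarrow> 'a::real_inner"
  assumes "(f has_vector_derivative f') (at x within S)" "f x \<noteq> 0"
  shows "((\<lambda>y. norm (f y)) has_real_derivative (f x \<bullet> f') / norm (f x)) (at x within S)"
  unfolding has_field_derivative_def
  apply (rule has_derivative_eq_rhs)
   apply (rule has_derivative_compose[OF assms(1)[unfolded has_vector_derivative_def] has_derivative_norm[OF assms(2)]])
  by (auto simp: fun_eq_iff sgn_div_norm inner_commute field_simps)

lemma inner_vd:
  fixes f g :: "real \<Rightarrow> 'a::real_inner"
  assumes "(f has_vector_derivative f') (at x within S)" "(g has_vector_derivative g') (at x within S)"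
  shows "((\<lambda>y. f y \<bullet> g y) has_real_derivative (f x \<bullet> g' + f' \<bullet> g x)) (at x within S)"
  unfolding has_field_derivative_def
  apply (rule has_derivative_eq_rhs)
   apply (rule has_derivative_inner[OF assms(1)[unfolded has_vector_derivative_def] assms(2)[unfolded has_vector_derivative_def]])
  by (auto simp: fun_eq_iff algebra_simps)

definition kap :: "complex \<Rightarrow> complex \<Rightarrow> real" where
  "kap a b = Im (cnj a * b) / norm a ^ 3"
definition nrm :: "complex \<Rightarrow> complex" where
  "nrm a = \<i> * a / complex_of_real (norm a)"

lemma P_identity:
  fixes a b v :: complex
  assumes "a \<noteq> 0"
  shows "(b \<bullet> v) / norm a - (a \<bullet> v) * (a \<bullet> b) / norm a ^ 3 = kap a b * (v \<bullet> nrm a) * norm a"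
proof -
  have n2: "norm a ^ 2 = Re a ^ 2 + Im a ^ 2" by (simp add: cmod_power2)
  have n0: "norm a \<noteq> 0" using assms by simp
  have "(b \<bullet> v) * norm a ^ 2 - (a \<bullet> v) * (a \<bullet> b) = Im (cnj a * b) * (v \<bullet> (\<i> * a))"
    unfolding n2 by (simp add: inner_complex_def algebra_simps power2_eq_square)
  moreover have "v \<bullet> nrm a = (v \<bullet> (\<i> * a)) / norm a"
    unfolding nrm_def inner_complex_def using n0 by (simp add: divide_simps)
  ultimately show ?thesis unfolding kap_def using n0
    by (simp add: field_simps power2_eq_square power3_eq_cube)
qed

lemma pointwise_ineq:
  fixes l k x n A :: real
  assumes "n > 0" "A > 0"
  shows "2 * l * (- (k * x * n)) \<le> l^2 * n + (1 + A * k^2) * x^2 * n / A"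
proof -
  have e: "(1 + A * k^2) * x^2 * n / A = x^2 * n / A + k^2 * x^2 * n"
    using assms by (simp add: field_simps)
  have "0 \<le> x^2 * n / A" using assms by simp
  moreover have "0 \<le> n * (l + k * x)^2" using assms by simp
  ultimately show ?thesis unfolding e by (simp add: power2_eq_square algebra_simps)
qed


lemma phi_deriv_eq:
  fixes a b v w :: complex
  assumes "norm a \<noteq> 0"
  shows "((a \<bullet> w + b \<bullet> v) * norm a - (a \<bullet> v) * ((a \<bullet> b) / norm a)) / (norm a * norm a)
    = (a \<bullet> w) / norm a + ((b \<bullet> v) / norm a - (a \<bullet> v) * (a \<bullet> b) / norm a ^ 3)"
  using assms by (simp add: field_simps power3_eq_cube)

lemma quad_bound:
  fixes l M J :: real
  assumes "l > 0" "2 * (M / l) * M \<le> (M / l)^2 * l + J"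
  shows "M^2 \<le> l * J"
proof -
  have "(M / l)^2 * l = M^2 / l" using assms(1) by (simp add: power2_eq_square)
  moreover have "2 * (M / l) * M = 2 * (M^2 / l)" by (simp add: power2_eq_square)
  ultimately have "M^2 / l \<le> J" using assms(2) by linarith
  then have "M^2 \<le> J * l" using pos_divide_le_eq[OF assms(1)] by blast
  then show ?thesis by (simp add: mult.commute)
qed

lemma g_bound:
  fixes l M J A :: real
  assumes "l > 0" "A > 0" "J \<ge> 0" "M^2 \<le> l * J / A"
  shows "inverse (sqrt l) / 2 * M \<le> sqrt J / (2 * sqrt A)"
proof (cases "M \<le> 0")
  case True
  have "inverse (sqrt l) / 2 * M \<le> 0" by (rule mult_nonneg_nonpos) (use assms(1) True in auto)
  also have "0 \<le> sqrt J / (2 * sqrt A)" by (intro divide_nonneg_nonneg) (use assms in auto)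
  finally show ?thesis .
next
  case False
  have sl: "sqrt l > 0" using assms(1) by simp
  have "M = sqrt (M^2)" using False by (simp only: real_sqrt_abs)
  also have "\<dots> \<le> sqrt (l * J / A)" using assms(4) real_sqrt_le_mono by blast
  also have "\<dots> = sqrt J / sqrt A * sqrt l" unfolding real_sqrt_divide real_sqrt_mult by simp
  finally have "M \<le> sqrt J / sqrt A * sqrt l" .
  then have "M / sqrt l \<le> sqrt J / sqrt A" using pos_divide_le_eq[OF sl] by blast
  then have "(M / sqrt l) / 2 \<le> (sqrt J / sqrt A) / 2" by simp
  moreover have "inverse (sqrt l) / 2 * M = (M / sqrt l) / 2" by (simp only: divide_inverse mult.commute mult.left_commute)
  moreover have "sqrt J / (2 * sqrt A) = (sqrt J / sqrt A) / 2" by (simp only: divide_divide_eq_left mult.commute)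
  ultimately show ?thesis by simp
qed

lemma path_bound:
  assumes A: "A > 0" and sp: "smooth_path c"
  shows "sqrt (len (c 1)) - sqrt (len (c 0)) \<le> L_hor A c / (2 * sqrt A)"
proof -
  obtain U D where UD: "open U \<and> {0..1} \<times> UNIV \<subseteq> U \<and>
        (\<forall>p\<in>U. D 0 0 p = case_prod c p) \<and>
        (\<forall>i j. continuous_on U (D i j)) \<and>
        (\<forall>i j t \<theta>. (t, \<theta>) \<in> U \<longrightarrow>
            ((\<lambda>s. D i j (s, \<theta>)) has_vector_derivative D (Suc i) j (t, \<theta>)) (at t) \<and>
            ((\<lambda>s. D i j (t, s)) has_vector_derivative D i (Suc j) (t, \<theta>)) (at \<theta>))"
    using conjunct1[OF sp[unfolded smooth_path_def]] by (elim exE) (erule that)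
  have imm': "\<forall>t\<in>{0..1}. immersion (c t)" using conjunct2[OF sp[unfolded smooth_path_def]] .
  have U: "open U" "{0..1} \<times> UNIV \<subseteq> U" using UD by simp_all
  have D00: "\<And>p. p \<in> U \<Longrightarrow> D 0 0 p = case_prod c p" using UD by simp
  have Dc: "\<And>i j. continuous_on U (D i j)" using UD by simp
  have Dt: "\<And>i j t \<theta>. (t, \<theta>) \<in> U \<Longrightarrow> ((\<lambda>s. D i j (s, \<theta>)) has_vector_derivative D (Suc i) j (t, \<theta>)) (at t)"
    using UD by simp
  have Dth: "\<And>i j t \<theta>. (t, \<theta>) \<in> U \<Longrightarrow> ((\<lambda>s. D i j (t, s)) has_vector_derivative D i (Suc j) (t, \<theta>)) (at \<theta>)"
    using UD by simp
  have imm: "\<And>t. t \<in> {0..1} \<Longrightarrow> immersion (c t)" using imm' by simp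
  have inU: "(t, \<theta>) \<in> U" if "t \<in> {0..1}" for t \<theta> using U(2) that by auto
  have ceq: "c t = (\<lambda>\<theta>. D 0 0 (t, \<theta>))" if "t \<in> {0..1}" for t
    using D00 inU[OF that] by auto
  have dth: "d_theta (c t) \<theta> = D 0 1 (t, \<theta>)" if "t \<in> {0..1}" for t \<theta>
    unfolding d_theta_def ceq[OF that] using Dth[OF inU[OF that], of 0 0] vector_derivative_at by fastforce
  have dth2: "d_theta (d_theta (c t)) \<theta> = D 0 2 (t, \<theta>)" if "t \<in> {0..1}" for t \<theta>
  proof -
    have "d_theta (c t) = (\<lambda>\<theta>. D 0 1 (t, \<theta>))" using dth[OF that] by auto
    then show ?thesis unfolding d_theta_def using Dth[OF inU[OF that], of 0 1] vector_derivative_at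
      by (fastforce simp: numeral_2_eq_2)
  qed
  have dt: "vector_derivative (\<lambda>s. c s \<theta>) (at t) = D 1 0 (t, \<theta>)" if "t \<in> {0..1}" for t \<theta>
  proof -
    have o: "open ((\<lambda>s. (s, \<theta>)) -` U)"
      by (rule open_vimage[OF U(1)]) (intro continuous_intros)
    have "((\<lambda>s. c s \<theta>) has_vector_derivative D 1 0 (t, \<theta>)) (at t)"
      using has_vector_derivative_transform_within_open[OF Dt[OF inU[OF that], of 0 0] o, where g="\<lambda>s. c s \<theta>"]
        inU[OF that] D00 by auto
    then show ?thesis using vector_derivative_at by blast
  qed
  have nz: "D 0 1 (t, \<theta>) \<noteq> 0" if "t \<in> {0..1}" for t \<theta>
    using imm[OF that] dth[OF that] unfolding immersion_def d_theta_def by metis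
  have per01: "D 0 1 (t, \<theta> + 2*pi) = D 0 1 (t, \<theta>)" if "t \<in> {0..1}" for t \<theta>
  proof -
    have "\<And>x. (\<lambda>s. D 0 0 (t, s)) (x + 2*pi) = (\<lambda>s. D 0 0 (t, s)) x"
      using imm[OF that] ceq[OF that] unfolding immersion_def by metis
    from periodic_deriv[where f="\<lambda>s. D 0 0 (t, s)" and f'="\<lambda>x. D 0 1 (t, x)", OF this] Dth[OF inU[OF that], of 0 0] show ?thesis by simp
  qed
  have per10: "D 1 0 (t, \<theta> + 2*pi) = D 1 0 (t, \<theta>)" if "t \<in> {0<..<1}" for t \<theta>
  proof -
    have t01: "t \<in> {0..1}" using that by auto
    have d1: "((\<lambda>s. D 0 0 (s, \<theta> + 2*pi)) has_vector_derivative D 1 0 (t, \<theta> + 2*pi)) (at t)"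
      using Dt[OF inU[OF t01, of "\<theta> + 2*pi"], of 0 0] by simp
    have "((\<lambda>s. D 0 0 (s, \<theta>)) has_vector_derivative D 1 0 (t, \<theta> + 2*pi)) (at t)"
    proof (rule has_vector_derivative_transform_within_open[OF d1 open_greaterThanLessThan that])
      fix s :: real assume s: "s \<in> {0<..<1}"
      then have s01: "s \<in> {0..1}" by auto
      have "c s (\<theta> + 2*pi) = c s \<theta>" using imm[OF s01] unfolding immersion_def by (elim conjE) (erule allE)
      then show "D 0 0 (s, \<theta> + 2*pi) = D 0 0 (s, \<theta>)" using D00 inU[OF s01] by simp
    qed
    moreover have "((\<lambda>s. D 0 0 (s, \<theta>)) has_vector_derivative D 1 0 (t, \<theta>)) (at t)"
      using Dt[OF inU[OF t01, of \<theta>], of 0 0] by simp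
    ultimately show ?thesis using vector_derivative_unique_at by blast
  qed
  define K where "K = {0..1::real} \<times> {0..2*pi}"
  have KU: "K \<subseteq> U" using U(2) by (auto simp: K_def)
  have DcK: "continuous_on K (D i j)" for i j using continuous_on_subset[OF Dc KU] .
  have nzK: "D 0 1 p \<noteq> 0" if "p \<in> K" for p using nz that by (cases p) (auto simp: K_def)
  have nzK': "D 0 (Suc 0) p \<noteq> 0" if "p \<in> K" for p using nzK[OF that] by simp
  have slice: "continuous_on {0..2*pi} (\<lambda>\<theta>. F (t, \<theta>))" if "continuous_on K F" "t \<in> {0..1}" for F t
    by (rule continuous_on_compose2[OF that(1)]) (use that(2) in \<open>auto simp: K_def intro!: continuous_intros\<close>)
  have sub: "continuous_on S F" if "continuous_on K F" "S \<subseteq> K" for F S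
    using continuous_on_subset that by blast
  define Wp where "Wp p = (1 + A * (kap (D 0 1 p) (D 0 2 p))^2) * (D 1 0 p \<bullet> nrm (D 0 1 p))^2 * norm (D 0 1 p)" for p
  define I where "I t = integral {0..2*pi} (\<lambda>\<theta>. Wp (t, \<theta>))" for t
  define l where "l t = integral {0..2*pi} (\<lambda>\<theta>. norm (D 0 1 (t, \<theta>)))" for t
  define Q where "Q p = (D 0 1 p \<bullet> D 1 1 p) / norm (D 0 1 p)" for p
  define P where "P p = (D 0 2 p \<bullet> D 1 0 p) / norm (D 0 1 p) - (D 0 1 p \<bullet> D 1 0 p) * (D 0 1 p \<bullet> D 0 2 p) / norm (D 0 1 p) ^ 3" for p
  define M where "M t = integral {0..2*pi} (\<lambda>\<theta>. - P (t, \<theta>))" for t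
  have Wc: "continuous_on K Wp" unfolding Wp_def kap_def nrm_def
    by (intro continuous_intros DcK) (use nzK nzK' in auto)
  have Nc: "continuous_on K (\<lambda>p. norm (D 0 1 p))" by (intro continuous_intros DcK)
  have Qc: "continuous_on K Q" unfolding Q_def by (intro continuous_intros DcK) (use nzK nzK' in auto)
  have Pc: "continuous_on K P" unfolding P_def by (intro continuous_intros DcK) (use nzK nzK' in auto)
  have Wnn: "Wp p \<ge> 0" for p
  proof -
    have "1 + A * (kap (D 0 1 p) (D 0 2 p))^2 \<ge> 0" using A by (simp add: add_nonneg_nonneg)
    then show ?thesis unfolding Wp_def by simp
  qed
  have cbox_eq: "cbox 0 (2*pi) = {0..2*pi::real}" by simp
  have Ic: "continuous_on {0..1} I"
  proof -
    have "continuous_on ({0..1} \<times> cbox 0 (2*pi)) (\<lambda>(x, t). Wp (x, t))"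
      using Wc unfolding K_def cbox_eq by (simp add: case_prod_beta')
    from integral_continuous_on_param[OF this] show ?thesis unfolding I_def cbox_eq .
  qed
  have lc: "continuous_on {0..1} l"
  proof -
    have "continuous_on ({0..1} \<times> cbox 0 (2*pi)) (\<lambda>(x, t). norm (D 0 1 (x, t)))"
      using Nc unfolding K_def cbox_eq by (simp add: case_prod_beta')
    from integral_continuous_on_param[OF this] show ?thesis unfolding l_def cbox_eq .
  qed
  have Inn: "I t \<ge> 0" if "t \<in> {0..1}" for t
    unfolding I_def by (rule integral_nonneg) (use slice[OF Wc that] Wnn integrable_continuous_interval in auto)
  have lpos: "l t > 0" if "t \<in> {0..1}" for t
  proof -
    have c: "continuous_on {0..2*pi} (\<lambda>\<theta>. norm (D 0 1 (t, \<theta>)))" using slice[OF Nc that] by simp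
    obtain \<theta>0 where "\<theta>0 \<in> {0..2*pi}" and m: "\<And>y. y \<in> {0..2*pi} \<Longrightarrow> norm (D 0 1 (t, \<theta>0)) \<le> norm (D 0 1 (t, y))"
      using continuous_attains_inf[OF compact_Icc _ c] by auto
    define m0 where "m0 = norm (D 0 1 (t, \<theta>0))"
    have m0: "m0 > 0" using nz[OF that] unfolding m0_def by simp
    have "integral {0..2*pi} (\<lambda>\<theta>. m0) \<le> l t"
      unfolding l_def by (rule integral_le) (use m c integrable_continuous_interval in \<open>auto simp: m0_def\<close>)
    moreover have "integral {0..2*pi} (\<lambda>\<theta>. m0) = 2*pi*m0" by simp
    moreover have "2*pi*m0 > 0" using m0 by simp
    ultimately show ?thesis by linarith
  qed
  have lenl: "len (c t) = l t" if "t \<in> {0..1}" for t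
    unfolding len_def l_def using dth[OF that] by (simp add: d_theta_def)
  have Lh: "L_hor A c = integral {0..1} (\<lambda>t. sqrt (I t))"
    unfolding L_hor_def
  proof (rule integral_cong)
    fix t :: real assume t: "t \<in> {0..1}"
    show "sqrt (integral {0..2*pi} (\<lambda>\<theta>. (1 + A * (curvature (c t) \<theta>)\<^sup>2) *
      (vector_derivative (\<lambda>s. c s \<theta>) (at t) \<bullet> normal (c t) \<theta>)\<^sup>2 * norm (d_theta (c t) \<theta>))) = sqrt (I t)"
      unfolding I_def Wp_def curvature_def normal_def kap_def nrm_def dth[OF t] dth2[OF t] dt[OF t] ..
  qed
  have ld: "(l has_real_derivative integral {0..2*pi} (\<lambda>\<theta>. Q (t, \<theta>))) (at t)" if t: "t \<in> {0<..<1}" for t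
  proof -
    have t01: "t \<in> {0..1}" using t by auto
    have "(l has_real_derivative integral (cbox 0 (2*pi)) (\<lambda>\<theta>. Q (t, \<theta>))) (at t within {0<..<1})"
      unfolding l_def cbox_eq[symmetric]
    proof (rule leibniz_rule_field_derivative[where fx="\<lambda>t \<theta>. Q (t, \<theta>)"])
      fix x \<theta> :: real assume x: "x \<in> {0<..<1}" and th: "\<theta> \<in> cbox 0 (2*pi)"
      have x01: "x \<in> {0..1}" using x by auto
      have d: "((\<lambda>s. D 0 1 (s, \<theta>)) has_vector_derivative D 1 1 (x, \<theta>)) (at x)"
        using Dt[OF inU[OF x01, of \<theta>], of 0 1] by simp
      show "((\<lambda>x. norm (D 0 1 (x, \<theta>))) has_real_derivative Q (x, \<theta>)) (at x within {0<..<1})"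
        unfolding Q_def by (rule has_field_derivative_at_within, rule norm_vd[OF d nz[OF x01]])
    next
      fix x :: real assume x: "x \<in> {0<..<1}"
      then have x01: "x \<in> {0..1}" by auto
      show "(\<lambda>\<theta>. norm (D 0 1 (x, \<theta>))) integrable_on cbox 0 (2*pi)"
        unfolding cbox_eq by (rule integrable_continuous_interval) (use slice[OF Nc x01] in simp)
    next
      show "continuous_on ({0<..<1} \<times> cbox 0 (2*pi)) (\<lambda>(x, \<theta>). Q (x, \<theta>))"
      proof -
        have "{0<..<1} \<times> cbox 0 (2*pi) \<subseteq> K" unfolding cbox_eq K_def by (rule Sigma_mono) auto
        from sub[OF Qc this] show ?thesis by (simp add: case_prod_beta')
      qed
    qed (use t in auto)
    then show ?thesis unfolding cbox_eq using at_within_open[OF t open_greaterThanLessThan] by simp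
  qed
  have ibp: "integral {0..2*pi} (\<lambda>\<theta>. Q (t, \<theta>)) = M t" if t: "t \<in> {0<..<1}" for t
  proof -
    have t01: "t \<in> {0..1}" using t by auto
    define ph where "ph \<theta> = (D 0 1 (t, \<theta>) \<bullet> D 1 0 (t, \<theta>)) / norm (D 0 1 (t, \<theta>))" for \<theta>
    have phd: "(ph has_vector_derivative (Q (t, \<theta>) + P (t, \<theta>))) (at \<theta> within {0..2*pi})" for \<theta>
    proof -
      have da: "((\<lambda>s. D 0 1 (t, s)) has_vector_derivative D 0 2 (t, \<theta>)) (at \<theta>)"
        using Dth[OF inU[OF t01, of \<theta>], of 0 1] by (simp add: numeral_2_eq_2)
      have dv: "((\<lambda>s. D 1 0 (t, s)) has_vector_derivative D 1 1 (t, \<theta>)) (at \<theta>)"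
        using Dth[OF inU[OF t01, of \<theta>], of 1 0] by simp
      have n0: "norm (D 0 1 (t, \<theta>)) \<noteq> 0" using nz[OF t01] by simp
      have "(ph has_real_derivative
          ((D 0 1 (t, \<theta>) \<bullet> D 1 1 (t, \<theta>) + D 0 2 (t, \<theta>) \<bullet> D 1 0 (t, \<theta>)) * norm (D 0 1 (t, \<theta>)) -
           (D 0 1 (t, \<theta>) \<bullet> D 1 0 (t, \<theta>)) * ((D 0 1 (t, \<theta>) \<bullet> D 0 2 (t, \<theta>)) / norm (D 0 1 (t, \<theta>))))
          / (norm (D 0 1 (t, \<theta>)) * norm (D 0 1 (t, \<theta>)))) (at \<theta>)"
        unfolding ph_def by (rule DERIV_divide[OF inner_vd[OF da dv] norm_vd[OF da nz[OF t01]] n0])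
      then have "(ph has_real_derivative (Q (t, \<theta>) + P (t, \<theta>))) (at \<theta>)"
        unfolding phi_deriv_eq[OF n0] Q_def P_def .
      then show ?thesis
        by (simp add: has_real_derivative_iff_has_vector_derivative has_vector_derivative_at_within)
    qed
    have "((\<lambda>\<theta>. Q (t, \<theta>) + P (t, \<theta>)) has_integral (ph (2*pi) - ph 0)) {0..2*pi}"
      by (rule fundamental_theorem_of_calculus) (use phd in auto)
    moreover have "ph (2*pi) = ph 0" unfolding ph_def using per01[OF t01, of 0] per10[OF t, of 0] by simp
    ultimately have h0: "((\<lambda>\<theta>. Q (t, \<theta>) + P (t, \<theta>)) has_integral 0) {0..2*pi}" by simp
    have iP: "(\<lambda>\<theta>. P (t, \<theta>)) integrable_on {0..2*pi}"
      by (rule integrable_continuous_interval) (use slice[OF Pc t01] in simp)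
    have "((\<lambda>\<theta>. (Q (t, \<theta>) + P (t, \<theta>)) + - P (t, \<theta>)) has_integral (0 + M t)) {0..2*pi}"
      unfolding M_def by (rule has_integral_add[OF h0]) (use has_integral_neg[OF integrable_integral[OF iP]] in simp)
    then show ?thesis by (simp add: integral_unique)
  qed
  have Mb: "(M t)^2 \<le> l t * I t / A" if t: "t \<in> {0<..<1}" for t
  proof -
    have t01: "t \<in> {0..1}" using t by auto
    define lam where "lam = M t / l t"
    have hP: "((\<lambda>\<theta>. - P (t, \<theta>)) has_integral M t) {0..2*pi}"
      unfolding M_def by (rule integrable_integral, rule integrable_continuous_interval) (use slice[OF Pc t01] in \<open>auto intro!: continuous_intros\<close>)
    have hN: "((\<lambda>\<theta>. norm (D 0 1 (t, \<theta>))) has_integral l t) {0..2*pi}"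
      unfolding l_def by (rule integrable_integral, rule integrable_continuous_interval) (use slice[OF Nc t01] in simp)
    have hW: "((\<lambda>\<theta>. Wp (t, \<theta>)) has_integral I t) {0..2*pi}"
      unfolding I_def by (rule integrable_integral, rule integrable_continuous_interval) (use slice[OF Wc t01] in simp)
    have "2 * lam * M t \<le> lam^2 * l t + I t / A"
    proof (rule has_integral_le[OF has_integral_mult_right[OF hP] has_integral_add[OF has_integral_mult_right[OF hN] has_integral_divide[OF hW]]])
      fix \<theta> :: real assume "\<theta> \<in> {0..2*pi}"
      have n0: "D 0 1 (t, \<theta>) \<noteq> 0" using nz[OF t01] .
      have "P (t, \<theta>) = kap (D 0 1 (t, \<theta>)) (D 0 2 (t, \<theta>)) * (D 1 0 (t, \<theta>) \<bullet> nrm (D 0 1 (t, \<theta>))) * norm (D 0 1 (t, \<theta>))"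
        unfolding P_def using P_identity[OF n0] by simp
      then show "2 * lam * - P (t, \<theta>) \<le> lam^2 * norm (D 0 1 (t, \<theta>)) + Wp (t, \<theta>) / A"
        unfolding Wp_def using pointwise_ineq[OF _ A, of "norm (D 0 1 (t, \<theta>))" lam] n0 by simp
    qed
    then have "(M t)^2 \<le> l t * (I t / A)"
      by (intro quad_bound lpos t01) (simp add: lam_def)
    then show ?thesis by simp
  qed
  define g where "g t = sqrt (l t)" for t
  define g' where "g' t = (if t \<in> {0<..<1} then inverse (sqrt (l t)) / 2 * M t else 0)" for t
  have gc: "continuous_on {0..1} g" unfolding g_def by (intro continuous_intros lc)
  have gd: "(g has_vector_derivative g' t) (at t)" if t: "t \<in> {0<..<1}" for t
  proof -
    have t01: "t \<in> {0..1}" using t by auto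
    have "(g has_real_derivative inverse (sqrt (l t)) / 2 * M t) (at t)"
      unfolding g_def using DERIV_chain2[OF DERIV_real_sqrt[OF lpos[OF t01]] ld[OF t]] ibp[OF t] by simp
    then show ?thesis using t unfolding g'_def by (simp add: has_real_derivative_iff_has_vector_derivative)
  qed
  have ftc: "(g' has_integral (g 1 - g 0)) {0..1}"
    by (rule fundamental_theorem_of_calculus_interior[OF _ gc gd]) auto
  have hI: "((\<lambda>t. sqrt (I t) / (2 * sqrt A)) has_integral (integral {0..1} (\<lambda>t. sqrt (I t)) / (2 * sqrt A))) {0..1}"
    by (rule has_integral_divide, rule integrable_integral, rule integrable_continuous_interval) (intro continuous_intros Ic)
  have "g 1 - g 0 \<le> integral {0..1} (\<lambda>t. sqrt (I t)) / (2 * sqrt A)"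
  proof (rule has_integral_le[OF ftc hI])
    fix t :: real assume t01: "t \<in> {0..1}"
    show "g' t \<le> sqrt (I t) / (2 * sqrt A)"
    proof (cases "t \<in> {0<..<1}")
      case True
      then show ?thesis unfolding g'_def using g_bound[OF lpos[OF t01] A Inn[OF t01] Mb[OF True]] by simp
    next
      case False
      then have "g' t = 0" unfolding g'_def by (simp only: if_False)
      moreover have "0 \<le> sqrt (I t) / (2 * sqrt A)" by (intro divide_nonneg_nonneg) (use A Inn[OF t01] in auto)
      ultimately show ?thesis by simp
    qed
  qed
  then show ?thesis unfolding g_def Lh using lenl[of 0] lenl[of 1] by simp
qed


theorem proposition3p3:
  fixes A :: real and c0 c1 :: "real \<Rightarrow> complex"
  assumes "A > 0" and "immersion c0" and "immersion c1"
  shows "ereal (sqrt (len c1) - sqrt (len c0)) \<le> dist_Bi A c0 c1 / ereal (2 * sqrt A)"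
proof -
  define k where "k = 2 * sqrt A"
  have k: "k > 0" using assms(1) unfolding k_def by simp
  have "ereal k * ereal (sqrt (len c1) - sqrt (len c0)) \<le> dist_Bi A c0 c1"
    unfolding dist_Bi_def
  proof (rule Inf_greatest, clarify)
    fix c assume c: "smooth_path c" "same_orbit (c 0) c0" "same_orbit (c 1) c1"
    obtain \<phi>0 where "circle_diff \<phi>0" "c 0 = c0 \<circ> \<phi>0" using c(2) unfolding same_orbit_def by blast
    then have l0: "len (c 0) = len c0" using len_reparam assms(2) by simp
    obtain \<phi>1 where "circle_diff \<phi>1" "c 1 = c1 \<circ> \<phi>1" using c(3) unfolding same_orbit_def by blast
    then have l1: "len (c 1) = len c1" using len_reparam assms(3) by simp
    have "sqrt (len c1) - sqrt (len c0) \<le> L_hor A c / k"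
      using path_bound[OF assms(1) c(1)] l0 l1 unfolding k_def by simp
    then have "k * (sqrt (len c1) - sqrt (len c0)) \<le> L_hor A c"
      using k by (simp add: field_simps)
    then show "ereal k * ereal (sqrt (len c1) - sqrt (len c0)) \<le> ereal (L_hor A c)"
      by simp
  qed
  then show ?thesis
    unfolding k_def[symmetric] using k by (simp add: ereal_le_divide_pos)
qed

end
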